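(* Let $d$ be an integer and let $b,\alpha,\beta\in\mathbb{Z}_{\ge0}^n$ satisfy $\alpha_1\le\cdots\le\alpha_n=d$, $\beta_1\le\cdots\le\beta_n=d$, $\alpha_i\le\beta_i$ for all $i$, $\alpha_1=0$ and $\beta_1=b_1$. Let $I\subseteq S=K[x_1,\ldots,x_n]$ be the ideal generated by all monomials $x^u$ with $u\in\mathbb{Z}_{\ge0}^n$, $0\le u_i\le b_i$ and $\alpha_i\le u_1+\cdots+u_i\le\beta_i$ for $i=1,\ldots,n$ (the basic PLP-polymatroidal ideal of type $(\mathbf{0},b\mid\alpha,\beta)$). Then $\mathrm{soc}(I)$ is the basic PLP-polymatroidal ideal of type $$(\mathbf{0},(b_1-1,\ldots,b_n-1)\mid(\alpha_1,\ldots,\alpha_{n-1},\alpha_n-1),(\beta_1-1,\ldots,\beta_n-1)),$$ that is, $\mathrm{soc}(I)$ is the ideal generated by all monomials $x^v$ with $v\in\mathbb{Z}_{\ge0}^n$ satisfying $0\le v_i\le b_i-1$ for $i=1,\ldots,n$, $\alpha_i\le v_1+\cdots+v_i\le\beta_i-1$ for $i=1,\ldots,n-1$, and $v_1+\cdots+v_n=d-1$.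
   Context: $K$ is a field and $\mathfrak{m}=(x_1,\ldots,x_n)$. $I$ is a polymatroidal ideal generated in degree $d$ and has a linear resolution; $\mathrm{soc}(I)$ denotes the ideal generated by all monomials $w$ of degree $d-1$ with $x_iw\in I$ for all $i$, so that $(I:\mathfrak{m})=I+\mathrm{soc}(I)$. The PLP-polymatroidal ideal of type $(\mathbf{0},b'\mid\alpha',\beta')$ is the ideal generated by the monomials $x^v$ with $0\le v_i\le b'_i$ and $\alpha'_i\le v_1+\cdots+v_i\le\beta'_i$ for all $i$. *)

theory Defs
  imports Main
begin

text \<open>Monomials of S = K[x_1,...,x_n] are identified with exponent vectors
  u :: nat \<Rightarrow> nat supported on {1..n}.  A monomial ideal is identified with
  the set of monomials it contains (which determines it, over any field K).\<close>

definition monomials_in :: "nat \<Rightarrow> (nat \<Rightarrow> nat) set" where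
  "monomials_in n = {u. \<forall>i. i \<notin> {1..n} \<longrightarrow> u i = 0}"

definition mono_ideal :: "nat \<Rightarrow> (nat \<Rightarrow> nat) set \<Rightarrow> (nat \<Rightarrow> nat) set" where
  "mono_ideal n G = {u \<in> monomials_in n. \<exists>g\<in>G. \<forall>i. g i \<le> u i}"

definition mdeg :: "nat \<Rightarrow> (nat \<Rightarrow> nat) \<Rightarrow> int" where
  "mdeg n u = (\<Sum>i=1..n. int (u i))"

definition mulx :: "nat \<Rightarrow> (nat \<Rightarrow> nat) \<Rightarrow> (nat \<Rightarrow> nat)" where
  "mulx i w = w(i := w i + 1)"

text \<open>Generators of soc(I): monomials w of degree d-1 with x_i w in I for all i.\<close>
definition soc_gens :: "nat \<Rightarrow> int \<Rightarrow> (nat \<Rightarrow> nat) set \<Rightarrow> (nat \<Rightarrow> nat) set" where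
  "soc_gens n d I = {w \<in> monomials_in n. mdeg n w = d - 1 \<and> (\<forall>i\<in>{1..n}. mulx i w \<in> I)}"

definition soc :: "nat \<Rightarrow> int \<Rightarrow> (nat \<Rightarrow> nat) set \<Rightarrow> (nat \<Rightarrow> nat) set" where
  "soc n d I = mono_ideal n (soc_gens n d I)"

definition plp_gens :: "nat \<Rightarrow> (nat \<Rightarrow> int) \<Rightarrow> (nat \<Rightarrow> int) \<Rightarrow> (nat \<Rightarrow> int) \<Rightarrow> (nat \<Rightarrow> nat) set" where
  "plp_gens n b \<alpha> \<beta> = {u \<in> monomials_in n. \<forall>i\<in>{1..n}.
      int (u i) \<le> b i \<and> \<alpha> i \<le> (\<Sum>j=1..i. int (u j)) \<and> (\<Sum>j=1..i. int (u j)) \<le> \<beta> i}"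

end

theory Submission
  imports Defs
begin

lemma sum_mulx:
  "(\<Sum>j=1..k. int (mulx i w j)) = (\<Sum>j=1..k. int (w j)) + (if i \<in> {1..k} then 1 else 0)"
proof -
  have "(\<Sum>j=1..k. int (mulx i w j)) = (\<Sum>j=1..k. int (w j) + (if j = i then 1 else 0))"
    by (rule sum.cong) (auto simp: mulx_def)
  also have "\<dots> = (\<Sum>j=1..k. int (w j)) + (\<Sum>j=1..k. (if j = i then 1 else 0))"
    by (rule sum.distrib)
  also have "(\<Sum>j=1..k. (if j = i then 1 else 0)) = (if i \<in> {1..k} then (1::int) else 0)"
    by (subst sum.delta) auto
  finally show ?thesis .
qed

lemma mulx_mono: "i \<in> {1..n} \<Longrightarrow> w \<in> monomials_in n \<Longrightarrow> mulx i w \<in> monomials_in n"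
  by (auto simp: monomials_in_def mulx_def)

lemma deg_in_ideal:
  assumes "\<alpha> n = d" "\<beta> n = d" "n \<ge> 1"
    and u: "u \<in> mono_ideal n (plp_gens n b \<alpha> \<beta>)" and du: "mdeg n u = d"
  shows "u \<in> plp_gens n b \<alpha> \<beta>"
proof -
  from u obtain g where g: "g \<in> plp_gens n b \<alpha> \<beta>" and le: "\<forall>i. g i \<le> u i"
    and um: "u \<in> monomials_in n"
    by (auto simp: mono_ideal_def)
  have "n \<in> {1..n}" using assms by auto
  with g have "\<alpha> n \<le> (\<Sum>j=1..n. int (g j)) \<and> (\<Sum>j=1..n. int (g j)) \<le> \<beta> n"
    unfolding plp_gens_def by blast
  with assms have sg: "(\<Sum>j=1..n. int (g j)) = d" by auto
  have "(\<Sum>j=1..n. int (u j) - int (g j)) = 0"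
    using sg du by (simp add: mdeg_def sum_subtractf)
  moreover have "\<forall>j\<in>{1..n}. 0 \<le> int (u j) - int (g j)" using le by auto
  ultimately have "\<forall>j\<in>{1..n}. int (u j) - int (g j) = 0"
    using sum_nonneg_eq_0_iff[of "{1..n}" "\<lambda>j. int (u j) - int (g j)"] by auto
  hence "\<forall>j\<in>{1..n}. u j = g j" by auto
  moreover have "\<forall>j. j \<notin> {1..n} \<longrightarrow> u j = 0 \<and> g j = 0"
    using g um by (auto simp: plp_gens_def monomials_in_def)
  ultimately have "u = g" by (metis ext)
  with g show ?thesis by simp
qed

theorem proposition3p3:
  fixes n :: nat and d :: int and b \<alpha> \<beta> :: "nat \<Rightarrow> int"
  assumes "n \<ge> 1"
    and "\<forall>i\<in>{1..n}. b i \<ge> 0 \<and> \<alpha> i \<ge> 0 \<and> \<beta> i \<ge> 0"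
    and "\<forall>i\<in>{1..<n}. \<alpha> i \<le> \<alpha> (i + 1)" and "\<alpha> n = d"
    and "\<forall>i\<in>{1..<n}. \<beta> i \<le> \<beta> (i + 1)" and "\<beta> n = d"
    and "\<forall>i\<in>{1..n}. \<alpha> i \<le> \<beta> i"
    and "\<alpha> 1 = 0" and "\<beta> 1 = b 1"
  shows "soc n d (mono_ideal n (plp_gens n b \<alpha> \<beta>)) =
         mono_ideal n {v \<in> monomials_in n.
            (\<forall>i\<in>{1..n}. int (v i) \<le> b i - 1) \<and>
            (\<forall>i\<in>{1..<n}. \<alpha> i \<le> (\<Sum>j=1..i. int (v j)) \<and> (\<Sum>j=1..i. int (v j)) \<le> \<beta> i - 1) \<and>
            (\<Sum>j=1..n. int (v j)) = d - 1}"
proof -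
  let ?G = "plp_gens n b \<alpha> \<beta>"
  let ?V = "{v \<in> monomials_in n.
            (\<forall>i\<in>{1..n}. int (v i) \<le> b i - 1) \<and>
            (\<forall>i\<in>{1..<n}. \<alpha> i \<le> (\<Sum>j=1..i. int (v j)) \<and> (\<Sum>j=1..i. int (v j)) \<le> \<beta> i - 1) \<and>
            (\<Sum>j=1..n. int (v j)) = d - 1}"
  have "soc_gens n d (mono_ideal n ?G) = ?V"
  proof (intro equalityI subsetI)
    fix w assume "w \<in> soc_gens n d (mono_ideal n ?G)"
    hence wm: "w \<in> monomials_in n" and dw: "mdeg n w = d - 1"
      and all: "\<forall>i\<in>{1..n}. mulx i w \<in> mono_ideal n ?G"
      by (auto simp: soc_gens_def)
    have dm: "mdeg n (mulx i w) = d" if "i \<in> {1..n}" for i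
      using sum_mulx[where k=n and i=i and w=w] dw that by (simp add: mdeg_def)
    have G: "mulx i w \<in> ?G" if "i \<in> {1..n}" for i
      using deg_in_ideal[OF assms(4,6,1) all[rule_format, OF that] dm[OF that]] .
    have c1: "int (w k) \<le> b k - 1" if "k \<in> {1..n}" for k
    proof -
      from G[OF that] that have "int (mulx k w k) \<le> b k" by (auto simp: plp_gens_def)
      thus ?thesis by (simp add: mulx_def)
    qed
    have c2: "\<alpha> k \<le> (\<Sum>j=1..k. int (w j)) \<and> (\<Sum>j=1..k. int (w j)) \<le> \<beta> k - 1"
      if "k \<in> {1..<n}" for k
    proof -
      have n1: "n \<in> {1..n}" and k1: "k \<in> {1..n}" using that by auto
      from G[OF n1] k1 have "\<alpha> k \<le> (\<Sum>j=1..k. int (mulx n w j))" by (auto simp: plp_gens_def)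
      moreover from G[OF k1] k1 have "(\<Sum>j=1..k. int (mulx k w j)) \<le> \<beta> k" by (auto simp: plp_gens_def)
      ultimately show ?thesis using that sum_mulx[where k=k and i=n and w=w] sum_mulx[where k=k and i=k and w=w] by auto
    qed
    show "w \<in> ?V" using wm c1 c2 dw by (auto simp: mdeg_def)
  next
    fix w assume w: "w \<in> ?V"
    hence wm: "w \<in> monomials_in n" by auto
    have "mulx i w \<in> ?G" if i: "i \<in> {1..n}" for i
      unfolding plp_gens_def
    proof (intro CollectI conjI ballI mulx_mono[OF i wm])
      fix k assume k: "k \<in> {1..n}"
      have "int (w k) < b k" using w k by auto
      thus "int (mulx i w k) \<le> b k" by (auto simp: mulx_def)
      show "\<alpha> k \<le> (\<Sum>j=1..k. int (mulx i w j))"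
      proof (cases "k = n")
        case True thus ?thesis using w sum_mulx[where k=k and i=i and w=w] i assms(4) by auto
      next
        case False hence "k \<in> {1..<n}" using k by auto
        hence "\<alpha> k \<le> (\<Sum>j=1..k. int (w j)) \<and> (\<Sum>j=1..k. int (w j)) \<le> \<beta> k - 1"
          using w by blast
        thus ?thesis using sum_mulx[where k=k and i=i and w=w] by auto
      qed
      show "(\<Sum>j=1..k. int (mulx i w j)) \<le> \<beta> k"
      proof (cases "k = n")
        case True thus ?thesis using w sum_mulx[where k=k and i=i and w=w] i assms(6) by auto
      next
        case False hence "k \<in> {1..<n}" using k by auto
        hence "\<alpha> k \<le> (\<Sum>j=1..k. int (w j)) \<and> (\<Sum>j=1..k. int (w j)) \<le> \<beta> k - 1"
          using w by blast
        thus ?thesis using sum_mulx[where k=k and i=i and w=w] by auto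
      qed
    qed
    hence "mulx i w \<in> mono_ideal n ?G" if "i \<in> {1..n}" for i
      using that mulx_mono[OF that wm] by (auto simp: mono_ideal_def)
    thus "w \<in> soc_gens n d (mono_ideal n ?G)"
      using w by (auto simp: soc_gens_def mdeg_def)
  qed
  thus ?thesis by (simp add: soc_def)
qed

end
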